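(* Let $A:X\to Y$ be a bounded linear operator between Banach spaces, $1<p<\infty$, $C,\sigma>0$, and $G\subset B_Y$ with $\overline{\mathrm{co}}(G)=B_Y$. Suppose that for every $y\in G$ and every weakly null net $(x_\lambda)\subset\sigma B_X$, $\limsup_\lambda\|y+Ax_\lambda\|\le 1+C\sigma^p$. Then $\rho(\sigma,A)\le C\sigma^p$.
   Context: $\rho(\sigma,A)=\sup\{\limsup_\lambda\|y+Ax_\lambda\|-1 : y\in B_Y,\ (x_\lambda)\text{ a weakly null net in }\sigma B_X\}$. *)

theory Defs
  imports "HOL-Analysis.Analysis" "HOL-Library.Liminf_Limsup"
begin

text \<open>A weakly null net contained in \<sigma> B_X, represented by the filter it induces on X
  (the image filter of the net): a proper filter, concentrated on the closed ball of
  radius \<sigma>, along which every continuous linear functional tends to 0.\<close>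
definition weakly_null_net_in :: "'a::real_normed_vector filter \<Rightarrow> real \<Rightarrow> bool" where
  "weakly_null_net_in F \<sigma> \<longleftrightarrow>
     F \<noteq> bot \<and> eventually (\<lambda>x. x \<in> cball 0 \<sigma>) F \<and>
     (\<forall>f::'a \<Rightarrow> real. bounded_linear f \<longrightarrow> (f \<longlongrightarrow> 0) F)"

definition rho :: "real \<Rightarrow> ('a::real_normed_vector \<Rightarrow> 'b::real_normed_vector) \<Rightarrow> ereal" where
  "rho \<sigma> A = (SUP yF \<in> {(y, F). y \<in> cball (0::'b) 1 \<and> weakly_null_net_in F \<sigma>}.
       Limsup (snd yF) (\<lambda>x. ereal (norm (fst yF + A x))) - 1)"

end

theory Submission
  imports Defs
begin

lemma limsup_le_ereal_iff:
  "Limsup F (\<lambda>x. ereal (f x)) \<le> ereal K \<longleftrightarrow> (\<forall>e>0. eventually (\<lambda>x. f x < K + e) F)"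
proof
  assume L: "Limsup F (\<lambda>x. ereal (f x)) \<le> ereal K"
  show "\<forall>e>0. eventually (\<lambda>x. f x < K + e) F"
  proof (intro allI impI)
    fix e :: real assume "e > 0"
    then have "ereal (K + e) > ereal K" by simp
    with L Limsup_le_iff[of F "\<lambda>x. ereal (f x)" "ereal K"]
    have "eventually (\<lambda>x. ereal (K+e) > ereal (f x)) F" by blast
    then show "eventually (\<lambda>x. f x < K + e) F" by simp
  qed
next
  assume H: "\<forall>e>0. eventually (\<lambda>x. f x < K + e) F"
  show "Limsup F (\<lambda>x. ereal (f x)) \<le> ereal K"
    unfolding Limsup_le_iff
  proof (intro allI impI)
    fix z assume z: "z > ereal K"
    show "eventually (\<lambda>x. z > ereal (f x)) F"
    proof (cases z)
      case (real r)
      with z have "r - K > 0" by simp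
      with H have "eventually (\<lambda>x. f x < K + (r - K)) F" by blast
      then show ?thesis by eventually_elim (simp add: real)
    next
      case PInf then show ?thesis by simp
    next
      case MInf with z show ?thesis by simp
    qed
  qed
qed

theorem proposition2p2:
  fixes A :: "'a::banach \<Rightarrow> 'b::banach"
    and p C \<sigma> :: real
    and G :: "'b set"
  assumes "bounded_linear A"
    and "1 < p"
    and "C > 0" and "\<sigma> > 0"
    and "G \<subseteq> cball 0 1"
    and "closure (convex hull G) = cball 0 1"
    and "\<forall>y\<in>G. \<forall>F::'a filter. weakly_null_net_in F \<sigma> \<longrightarrow>
           Limsup F (\<lambda>x. ereal (norm (y + A x))) \<le> ereal (1 + C * \<sigma> powr p)"
  shows "rho \<sigma> A \<le> ereal (C * \<sigma> powr p)"
proof -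
  define K where "K = 1 + C * \<sigma> powr p"
  define S where "S = {y. \<forall>F::'a filter. weakly_null_net_in F \<sigma> \<longrightarrow>
      (\<forall>e>0. eventually (\<lambda>x. norm (y + A x) < K + e) F)}"
  have GS: "G \<subseteq> S"
    using assms(7) unfolding S_def K_def limsup_le_ereal_iff by blast
  have cS: "convex S"
    unfolding convex_def
  proof (intro allI impI ballI)
    fix u v and s t :: real
    assume u: "u \<in> S" and v: "v \<in> S" and st: "0 \<le> s" "0 \<le> t" "s + t = 1"
    show "s *\<^sub>R u + t *\<^sub>R v \<in> S"
      unfolding S_def
    proof (intro CollectI allI impI)
      fix F :: "'a filter" and e :: real
      assume F: "weakly_null_net_in F \<sigma>" and e: "e > 0"
      have "eventually (\<lambda>x. norm (u + A x) < K + e) F" using u F e unfolding S_def by blast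
      moreover have "eventually (\<lambda>x. norm (v + A x) < K + e) F" using v F e unfolding S_def by blast
      ultimately show "eventually (\<lambda>x. norm (s *\<^sub>R u + t *\<^sub>R v + A x) < K + e) F"
      proof eventually_elim
        case (elim x)
        have eq: "s *\<^sub>R u + t *\<^sub>R v + A x = s *\<^sub>R (u + A x) + t *\<^sub>R (v + A x)"
        proof -
          have "A x = s *\<^sub>R A x + t *\<^sub>R A x" using st(3) by (metis scaleR_add_left scaleR_one)
          then have "s *\<^sub>R u + t *\<^sub>R v + A x = s *\<^sub>R u + t *\<^sub>R v + (s *\<^sub>R A x + t *\<^sub>R A x)" by simp
          also have "\<dots> = s *\<^sub>R (u + A x) + t *\<^sub>R (v + A x)" by (simp add: scaleR_add_right)
          finally show ?thesis .
        qed
        have "norm (s *\<^sub>R u + t *\<^sub>R v + A x) \<le> norm (s *\<^sub>R (u + A x)) + norm (t *\<^sub>R (v + A x))"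
          unfolding eq by (rule norm_triangle_ineq)
        also have "\<dots> = s * norm (u + A x) + t * norm (v + A x)" using st by simp
        finally have n1: "norm (s *\<^sub>R u + t *\<^sub>R v + A x) \<le> s * norm (u + A x) + t * norm (v + A x)" .
        have "s * norm (u + A x) + t * norm (v + A x) < K + e"
        proof (cases "s = 0")
          case True then show ?thesis using st elim by simp
        next
          case False then have "s > 0" using st by simp
          then have "s * norm (u + A x) < s * (K + e)" using elim by simp
          moreover have "t * norm (v + A x) \<le> t * (K + e)" using elim st by (intro mult_left_mono) auto
          moreover have "s * (K + e) + t * (K + e) = K + e" using st(3) by (simp add: distrib_right[symmetric])
          ultimately show ?thesis by linarith
        qed
        with n1 show ?case by linarith
      qed
    qed
  qed
  have hullS: "convex hull G \<subseteq> S" using GS cS by (simp add: hull_minimal)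
  have ballS: "cball 0 1 \<subseteq> S"
  proof
    fix y :: 'b assume "y \<in> cball 0 1"
    then have yc: "y \<in> closure (convex hull G)" using assms(6) by simp
    show "y \<in> S" unfolding S_def
    proof (intro CollectI allI impI)
      fix F :: "'a filter" and e :: real
      assume F: "weakly_null_net_in F \<sigma>" and e: "e > 0"
      obtain y' where y': "y' \<in> convex hull G" "dist y' y < e/2"
        using yc e by (meson closure_approachable half_gt_zero)
      have "eventually (\<lambda>x. norm (y' + A x) < K + e/2) F"
        using y'(1) hullS F e unfolding S_def by auto
      then show "eventually (\<lambda>x. norm (y + A x) < K + e) F"
      proof eventually_elim
        case (elim x)
        have "norm (y + A x) \<le> norm (y' + A x) + norm (y - y')"
          using norm_triangle_ineq[of "y' + A x" "y - y'"] by (simp add: algebra_simps)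
        then show ?case using elim y'(2) by (simp add: dist_norm norm_minus_commute)
      qed
    qed
  qed
  show ?thesis
    unfolding rho_def
  proof (rule SUP_least)
    fix yF :: "'b \<times> 'a filter" assume "yF \<in> {(y, F). y \<in> cball (0::'b) 1 \<and> weakly_null_net_in F \<sigma>}"
    then obtain y and F :: "'a filter" where yF: "yF = (y, F)" "y \<in> cball 0 1" "weakly_null_net_in F \<sigma>" by auto
    have "y \<in> S" using ballS yF by auto
    then have "Limsup F (\<lambda>x. ereal (norm (y + A x))) \<le> ereal K"
      unfolding limsup_le_ereal_iff S_def using yF(3) by blast
    then have "Limsup F (\<lambda>x. ereal (norm (y + A x))) - 1 \<le> ereal K - 1"
      by (intro ereal_minus_mono) auto
    then show "Limsup (snd yF) (\<lambda>x. ereal (norm (fst yF + A x))) - 1 \<le> ereal (C * \<sigma> powr p)"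
    proof -
      have "ereal K - 1 = ereal (C * \<sigma> powr p)" by (simp add: K_def one_ereal_def)
      then show ?thesis using yF(1) \<open>Limsup F _ - 1 \<le> ereal K - 1\<close> by simp
    qed
  qed
qed

end
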